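(* Let $\Gamma$ be a finite, simple, connected graph and $G\le\mathrm{Aut}(\Gamma)$ acting transitively on $\mathrm{E}(\Gamma)$. Let $\{u,v\}$ be an edge of $\Gamma$ and let $N$ be a normal subgroup of $G$ such that $N_v^{\Gamma(v)}$ is transitive. Let $A$ be the set of vertices $a$ of $\Gamma$ such that there is a path of even length between $u$ and $a$. Then $N$ acts transitively on $A$.
   Context: $N_v^{\Gamma(v)}$ is the permutation group induced by the stabiliser $N_v$ of $v$ in $N$ on the neighbourhood $\Gamma(v)$ of $v$. *)

theory Defs
  imports "HOL-Algebra.Algebra"
begin

definition simple_graph :: "'a set \<Rightarrow> ('a \<Rightarrow> 'a \<Rightarrow> bool) \<Rightarrow> bool" where
  "simple_graph V E \<longleftrightarrow> (\<forall>x y. E x y \<longrightarrow> x \<in> V \<and> y \<in> V) \<and>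
     (\<forall>x. \<not> E x x) \<and> (\<forall>x y. E x y \<longrightarrow> E y x)"

text \<open>A walk is a nonempty vertex list with consecutive vertices adjacent;
  its length is the number of edges, i.e. length minus one.\<close>
definition walk :: "'a set \<Rightarrow> ('a \<Rightarrow> 'a \<Rightarrow> bool) \<Rightarrow> 'a list \<Rightarrow> bool" where
  "walk V E xs \<longleftrightarrow> xs \<noteq> [] \<and> set xs \<subseteq> V \<and>
     (\<forall>i. Suc i < length xs \<longrightarrow> E (xs ! i) (xs ! Suc i))"

definition walk_between :: "'a set \<Rightarrow> ('a \<Rightarrow> 'a \<Rightarrow> bool) \<Rightarrow> 'a \<Rightarrow> 'a \<Rightarrow> 'a list \<Rightarrow> bool" where
  "walk_between V E x y xs \<longleftrightarrow> walk V E xs \<and> hd xs = x \<and> last xs = y"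

definition connected_graph :: "'a set \<Rightarrow> ('a \<Rightarrow> 'a \<Rightarrow> bool) \<Rightarrow> bool" where
  "connected_graph V E \<longleftrightarrow> (\<forall>x\<in>V. \<forall>y\<in>V. \<exists>xs. walk_between V E x y xs)"

definition edges :: "('a \<Rightarrow> 'a \<Rightarrow> bool) \<Rightarrow> 'a set set" where
  "edges E = {{x, y} | x y. E x y}"

definition nbhd :: "('a \<Rightarrow> 'a \<Rightarrow> bool) \<Rightarrow> 'a \<Rightarrow> 'a set" where
  "nbhd E v = {w. E v w}"

definition graph_auts :: "'a set \<Rightarrow> ('a \<Rightarrow> 'a \<Rightarrow> bool) \<Rightarrow> ('a \<Rightarrow> 'a) set" where
  "graph_auts V E = {g \<in> Bij V. \<forall>x\<in>V. \<forall>y\<in>V. E x y \<longleftrightarrow> E (g x) (g y)}"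

definition Aut_graph :: "'a set \<Rightarrow> ('a \<Rightarrow> 'a \<Rightarrow> bool) \<Rightarrow> ('a \<Rightarrow> 'a) monoid" where
  "Aut_graph V E = (BijGroup V) \<lparr>carrier := graph_auts V E\<rparr>"

definition transitive_on :: "('a \<Rightarrow> 'a) set \<Rightarrow> 'a set \<Rightarrow> bool" where
  "transitive_on K S \<longleftrightarrow> (\<forall>x\<in>S. \<forall>y\<in>S. \<exists>h\<in>K. h x = y)"

definition edge_transitive :: "('a \<Rightarrow> 'a) set \<Rightarrow> ('a \<Rightarrow> 'a \<Rightarrow> bool) \<Rightarrow> bool" where
  "edge_transitive H E \<longleftrightarrow> (\<forall>d1\<in>edges E. \<forall>d2\<in>edges E. \<exists>h\<in>H. h ` d1 = d2)"

definition stabiliser :: "('a \<Rightarrow> 'a) set \<Rightarrow> 'a \<Rightarrow> ('a \<Rightarrow> 'a) set" where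
  "stabiliser N v = {n \<in> N. n v = v}"

text \<open>N_v^{\<Gamma>(v)} is transitive: N_v acts transitively on \<Gamma>(v).\<close>
definition local_transitive :: "('a \<Rightarrow> 'a) set \<Rightarrow> ('a \<Rightarrow> 'a \<Rightarrow> bool) \<Rightarrow> 'a \<Rightarrow> bool" where
  "local_transitive N E v \<longleftrightarrow> transitive_on (stabiliser N v) (nbhd E v)"

end

theory Submission
  imports Defs
begin

locale L2 =
  fixes V :: "'a set" and E :: "'a \<Rightarrow> 'a \<Rightarrow> bool"
    and G N :: "('a \<Rightarrow> 'a) set" and u v :: 'a
  assumes sg: "simple_graph V E"
    and sub: "subgroup G (Aut_graph V E)"
    and et: "edge_transitive G E"
    and uv: "E u v"
    and nor: "N \<lhd> (Aut_graph V E)\<lparr>carrier := G\<rparr>"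
    and lt: "local_transitive N E v"
begin

abbreviation "GG \<equiv> (Aut_graph V E)\<lparr>carrier := G\<rparr>"

lemma grp: "group GG" using nor normal.axioms(2) by blast
lemma car: "carrier GG = G" by simp
lemma NG: "N \<subseteq> G" using nor normal_imp_subgroup subgroup.subset by fastforce

lemma Gaut: "g \<in> G \<Longrightarrow> g \<in> graph_auts V E"
  using subgroup.subset[OF sub] by (auto simp: Aut_graph_def)

lemma Gbij: "g \<in> G \<Longrightarrow> g \<in> Bij V" using Gaut graph_auts_def by blast

lemma Gmap: "g \<in> G \<Longrightarrow> x \<in> V \<Longrightarrow> g x \<in> V"
  using Gbij by (auto simp: Bij_def bij_betw_def)

lemma Gedge: "g \<in> G \<Longrightarrow> x \<in> V \<Longrightarrow> y \<in> V \<Longrightarrow> E x y \<longleftrightarrow> E (g x) (g y)"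
  using Gaut by (auto simp: graph_auts_def)

lemma EV: "E x y \<Longrightarrow> x \<in> V \<and> y \<in> V" using sg by (simp add: simple_graph_def)
lemma Esym: "E x y \<Longrightarrow> E y x" using sg by (simp add: simple_graph_def)

lemma mult_app: "g \<in> G \<Longrightarrow> h \<in> G \<Longrightarrow> x \<in> V \<Longrightarrow> (g \<otimes>\<^bsub>GG\<^esub> h) x = g (h x)"
  using Gbij[of g] Gbij[of h] by (simp add: Aut_graph_def BijGroup_def compose_def)

lemma one_app: "x \<in> V \<Longrightarrow> \<one>\<^bsub>GG\<^esub> x = x"
  by (simp add: Aut_graph_def BijGroup_def)

lemma inv_G: "g \<in> G \<Longrightarrow> inv\<^bsub>GG\<^esub> g \<in> G"
  using group.inv_closed[OF grp] by simp

lemma inv_app1: "g \<in> G \<Longrightarrow> x \<in> V \<Longrightarrow> g ((inv\<^bsub>GG\<^esub> g) x) = x"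
proof -
  assume g: "g \<in> G" and x: "x \<in> V"
  have "(g \<otimes>\<^bsub>GG\<^esub> inv\<^bsub>GG\<^esub> g) x = x"
    using group.r_inv[OF grp, of g] g x one_app by simp
  thus ?thesis using mult_app[OF g inv_G[OF g] x] by simp
qed

lemma inv_app2: "g \<in> G \<Longrightarrow> x \<in> V \<Longrightarrow> (inv\<^bsub>GG\<^esub> g) (g x) = x"
proof -
  assume g: "g \<in> G" and x: "x \<in> V"
  have "(inv\<^bsub>GG\<^esub> g \<otimes>\<^bsub>GG\<^esub> g) x = x"
    using group.l_inv[OF grp, of g] g x one_app by simp
  thus ?thesis using mult_app[OF inv_G[OF g] g x] by simp
qed

definition good where "good w \<longleftrightarrow> (\<exists>g\<in>G. g v = w)"

lemma edge_cases: "E x y \<Longrightarrow> \<exists>h\<in>G. (h u = x \<and> h v = y) \<or> (h u = y \<and> h v = x)"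
proof -
  assume "E x y"
  hence "{x,y} \<in> edges E" "{u,v} \<in> edges E" using uv by (auto simp: edges_def)
  then obtain h where h: "h \<in> G" "h ` {u,v} = {x,y}" using et unfolding edge_transitive_def by blast
  hence "{h u, h v} = {x,y}" by simp
  thus ?thesis using h by (auto simp: doubleton_eq_iff)
qed

lemma edge_good: "E x y \<Longrightarrow> good x \<or> good y"
  using edge_cases unfolding good_def by blast

lemma edge_notgood: "\<not> good u \<Longrightarrow> E x y \<Longrightarrow> good x \<Longrightarrow> \<not> good y"
proof
  assume nu: "\<not> good u" and e: "E x y" and gx: "good x" and gy: "good y"
  obtain h where h: "h \<in> G" "(h u = x \<and> h v = y) \<or> (h u = y \<and> h v = x)" using edge_cases[OF e] by blast
  have uV: "u \<in> V" using EV uv by blast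
  have "h u = x \<or> h u = y" using h(2) by blast
  hence "good (h u)" using gx gy by (elim disjE) simp_all
  then obtain k where k: "k \<in> G" "h u = k v"
    unfolding good_def by metis
  have "inv\<^bsub>GG\<^esub> h \<otimes>\<^bsub>GG\<^esub> k \<in> G" using monoid.m_closed[OF group.is_monoid[OF grp]] inv_G h k by simp
  moreover have "(inv\<^bsub>GG\<^esub> h \<otimes>\<^bsub>GG\<^esub> k) v = u"
    using mult_app[OF inv_G[OF h(1)] k(1)] EV[OF uv] k inv_app2[OF h(1) uV] by simp
  ultimately show False using nu unfolding good_def by blast
qed

lemma good_u_all: "good u \<Longrightarrow> E x y \<Longrightarrow> good y"
proof -
  assume gu: "good u" and e: "E x y"
  obtain h where h: "h \<in> G" "(h u = x \<and> h v = y) \<or> (h u = y \<and> h v = x)" using edge_cases[OF e] by blast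
  obtain k where k: "k \<in> G" "k v = u" using gu good_def by blast
  show ?thesis
  proof (cases "h v = y")
    case True thus ?thesis using h(1) unfolding good_def by blast
  next
    case False
    hence "h u = y" using h(2) by blast
    moreover have "h \<otimes>\<^bsub>GG\<^esub> k \<in> G" using monoid.m_closed[OF group.is_monoid[OF grp]] h k by simp
    moreover have "(h \<otimes>\<^bsub>GG\<^esub> k) v = h u" using mult_app[OF h(1) k(1)] EV[OF uv] k by simp
    ultimately show ?thesis unfolding good_def by metis
  qed
qed

lemma step: "good b \<Longrightarrow> E b a \<Longrightarrow> E b c \<Longrightarrow> \<exists>m\<in>N. m a = c"
proof -
  assume gb: "good b" and ba: "E b a" and bc: "E b c"
  obtain g where g: "g \<in> G" "g v = b" using gb good_def by blast
  let ?i = "(inv\<^bsub>GG\<^esub> g)"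
  have vV: "v \<in> V" using EV uv by blast
  have aV: "a \<in> V" and cV: "c \<in> V" using EV ba bc by auto
  have iG: "?i \<in> G" using inv_G g by blast
  have "E (?i b) (?i a)" using Gedge[OF iG, of b a] EV[OF ba] ba by simp
  hence "E v (?i a)" using inv_app2[OF g(1) vV] g by simp
  moreover have "E (?i b) (?i c)" using Gedge[OF iG, of b c] EV[OF bc] bc by simp
  hence "E v (?i c)" using inv_app2[OF g(1) vV] g by simp
  ultimately have nb: "?i a \<in> nbhd E v" "?i c \<in> nbhd E v" by (simp_all add: nbhd_def)
  have T: "\<forall>x\<in>nbhd E v. \<forall>y\<in>nbhd E v. \<exists>h\<in>stabiliser N v. h x = y"
    using lt unfolding local_transitive_def transitive_on_def .
  obtain s where s: "s \<in> stabiliser N v" "s (?i a) = ?i c"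
    using bspec[OF bspec[OF T nb(1)] nb(2)] by blast
  have sN: "s \<in> N" using s(1) unfolding stabiliser_def by simp
  have sG: "s \<in> G" using sN NG by blast
  have "g \<otimes>\<^bsub>GG\<^esub> s \<otimes>\<^bsub>GG\<^esub> ?i \<in> N"
    using normal.inv_op_closed2[OF nor, of g s] g sN by simp
  moreover have "(g \<otimes>\<^bsub>GG\<^esub> s \<otimes>\<^bsub>GG\<^esub> ?i) a = c"
  proof -
    have iaV: "?i a \<in> V" using Gmap[OF iG aV] .
    have gs: "g \<otimes>\<^bsub>GG\<^esub> s \<in> G" using monoid.m_closed[OF group.is_monoid[OF grp], of g s] g sG by simp
    have "(g \<otimes>\<^bsub>GG\<^esub> s \<otimes>\<^bsub>GG\<^esub> ?i) a = (g \<otimes>\<^bsub>GG\<^esub> s) (?i a)"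
      using mult_app[OF gs iG aV] .
    also have "\<dots> = g (s (?i a))" using mult_app[OF g(1) sG iaV] .
    also have "\<dots> = c" using s inv_app1[OF g(1) cV] by simp
    finally show ?thesis .
  qed
  ultimately show ?thesis by blast
qed

lemma parity: "walk V E xs \<Longrightarrow> hd xs = u \<Longrightarrow> \<not> good u \<Longrightarrow> j < length xs \<Longrightarrow> (good (xs ! j) \<longleftrightarrow> odd j)"
proof (induction j)
  case 0
  have "xs ! 0 = u" using 0 by (cases xs) simp_all
  thus ?case using 0 by simp
next
  case (Suc j)
  have w: "\<forall>i. Suc i < length xs \<longrightarrow> E (xs ! i) (xs ! Suc i)" using Suc.prems(1) unfolding walk_def by blast
  have e: "E (xs ! j) (xs ! Suc j)" using w Suc.prems(4) by blast
  have ih: "good (xs ! j) \<longleftrightarrow> odd j" using Suc.IH Suc.prems by simp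
  show ?case
  proof (cases "good (xs ! j)")
    case True thus ?thesis using edge_notgood[OF Suc.prems(3) e] ih by simp
  next
    case False thus ?thesis using edge_good[OF e] ih by simp
  qed
qed

lemma reach: "walk V E xs \<Longrightarrow> hd xs = u \<Longrightarrow> 2 * k < length xs \<Longrightarrow> \<exists>n\<in>N. n u = xs ! (2 * k)"
proof (induction k)
  case 0
  have "\<one>\<^bsub>GG\<^esub> \<in> N" using subgroup.one_closed[OF normal_imp_subgroup[OF nor]] .
  moreover have "\<one>\<^bsub>GG\<^esub> u = u" using one_app EV[OF uv] by blast
  moreover have "xs ! (2 * 0) = u" using 0 by (cases xs) simp_all
  ultimately show ?case by metis
next
  case (Suc k)
  have "2 * k < length xs" using Suc.prems(3) by simp
  then obtain n where n: "n \<in> N" "n u = xs ! (2*k)" using Suc.IH Suc.prems(1,2) by blast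
  have w: "\<forall>i. Suc i < length xs \<longrightarrow> E (xs ! i) (xs ! Suc i)" using Suc.prems(1) unfolding walk_def by blast
  have e1: "E (xs ! (2*k)) (xs ! Suc (2*k))" using w Suc.prems(3) by simp
  have e2: "E (xs ! Suc (2*k)) (xs ! Suc (Suc (2*k)))" using w Suc.prems(3) by simp
  have gb: "good (xs ! Suc (2*k))"
  proof (cases "good u")
    case True thus ?thesis using good_u_all e1 by blast
  next
    case False thus ?thesis using parity[OF Suc.prems(1,2) False] Suc.prems(3) by simp
  qed
  obtain m where m: "m \<in> N" "m (xs ! (2*k)) = xs ! Suc (Suc (2*k))"
    using step[OF gb Esym[OF e1] e2] by blast
  have "m \<otimes>\<^bsub>GG\<^esub> n \<in> N" using subgroup.m_closed[OF normal_imp_subgroup[OF nor] m(1) n(1)] .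
  moreover have "(m \<otimes>\<^bsub>GG\<^esub> n) u = xs ! (2 * Suc k)"
  proof -
    have "u \<in> V" using EV[OF uv] by simp
    hence "(m \<otimes>\<^bsub>GG\<^esub> n) u = m (n u)" using mult_app[of m n u] m(1) n(1) NG by blast
    thus ?thesis using m(2) n(2) by simp
  qed
  ultimately show ?case by blast
qed

lemma main: "transitive_on N {a \<in> V. \<exists>xs. walk_between V E u a xs \<and> even (length xs - 1)}"
proof -
  have R: "\<exists>n\<in>N. n u = a" if ain: "a \<in> {a \<in> V. \<exists>xs. walk_between V E u a xs \<and> even (length xs - 1)}" for a
  proof -
    obtain xs where xs: "walk_between V E u a xs" "even (length xs - 1)" using ain by blast
    have ne: "xs \<noteq> []" using xs(1) unfolding walk_between_def walk_def by simp
    from xs(2) obtain k where k: "length xs - 1 = 2 * k" by (rule evenE)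
    have "last xs = xs ! (2*k)" using ne k by (simp add: last_conv_nth)
    moreover have "walk V E xs" "hd xs = u" "last xs = a" using xs(1) unfolding walk_between_def by simp_all
    moreover have "2 * k < length xs" using ne k by (cases xs) simp_all
    ultimately have "\<exists>n\<in>N. n u = xs ! (2*k)" "xs ! (2*k) = a" using reach[of xs k] by simp_all
    thus ?thesis by simp
  qed
  show ?thesis unfolding transitive_on_def
  proof (intro ballI)
    fix x y assume x: "x \<in> {a \<in> V. \<exists>xs. walk_between V E u a xs \<and> even (length xs - 1)}"
      and y: "y \<in> {a \<in> V. \<exists>xs. walk_between V E u a xs \<and> even (length xs - 1)}"
    obtain n where n: "n \<in> N" "n u = x" using R x by blast
    obtain m where m: "m \<in> N" "m u = y" using R y by blast
    have sN: "subgroup N GG" using normal_imp_subgroup[OF nor] .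
    have inN: "inv\<^bsub>GG\<^esub> n \<in> N" using subgroup.m_inv_closed[OF sN] n by simp
    have "m \<otimes>\<^bsub>GG\<^esub> inv\<^bsub>GG\<^esub> n \<in> N" using subgroup.m_closed[OF sN m(1) inN] .
    moreover have "(m \<otimes>\<^bsub>GG\<^esub> inv\<^bsub>GG\<^esub> n) x = y"
    proof -
      have uV: "u \<in> V" using EV[OF uv] by simp
      have xV: "x \<in> V" using x by simp
      have mG: "m \<in> G" and nG: "n \<in> G" and iG: "inv\<^bsub>GG\<^esub> n \<in> G" using m(1) n(1) inN NG by auto
      have "(m \<otimes>\<^bsub>GG\<^esub> inv\<^bsub>GG\<^esub> n) x = m ((inv\<^bsub>GG\<^esub> n) x)" using mult_app[OF mG iG xV] .
      also have "(inv\<^bsub>GG\<^esub> n) x = u" using inv_app2[OF nG uV] n(2) by simp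
      finally show ?thesis using m(2) by simp
    qed
    ultimately show "\<exists>h\<in>N. h x = y" by blast
  qed
qed

end

theorem lemma2p6:
  fixes V :: "'a set" and E :: "'a \<Rightarrow> 'a \<Rightarrow> bool"
    and G N :: "('a \<Rightarrow> 'a) set" and u v :: 'a
  assumes "finite V" and "simple_graph V E" and "connected_graph V E"
    and "subgroup G (Aut_graph V E)"
    and "edge_transitive G E"
    and "E u v"
    and "N \<lhd> (Aut_graph V E)\<lparr>carrier := G\<rparr>"
    and "local_transitive N E v"
  shows "transitive_on N {a \<in> V. \<exists>xs. walk_between V E u a xs \<and> even (length xs - 1)}"
proof -
  interpret L2 V E G N u v by (rule L2.intro[OF assms(2,4,5,6,7,8)])
  show ?thesis by (rule main)
qed

end
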